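(* Let $A\in\mathbb{R}^{d\times d}$ be invertible, $\bm{b}\in\mathbb{R}^d$, $\bm{x}_0\in\mathbb{R}^d$, $\Sigma_0$ symmetric positive-definite, and write $\langle\bm{u},\bm{v}\rangle_{A\Sigma_0A^\top}=\bm{u}^\top A\Sigma_0A^\top\bm{v}$ with associated norm $\|\cdot\|_{A\Sigma_0A^\top}$. Define recursively: $\bm{r}_0=\bm{b}-A\bm{x}_0$, $\tilde{\bm{s}}_1=\bm{r}_0$, $\bm{s}_1=\tilde{\bm{s}}_1/\|\tilde{\bm{s}}_1\|_{A\Sigma_0A^\top}$; for $k\ge1$, with $S_k=[\bm{s}_1,\dots,\bm{s}_k]$ and $\Lambda_k=S_k^\top A\Sigma_0A^\top S_k$, set $\bm{x}_k=\bm{x}_0+\Sigma_0A^\top S_k\Lambda_k^{-1}S_k^\top\bm{r}_0$, $\bm{r}_k=\bm{b}-A\bm{x}_k$, $\tilde{\bm{s}}_{k+1}=\bm{r}_k-\langle\bm{s}_k,\bm{r}_k\rangle_{A\Sigma_0A^\top}\bm{s}_k$, and, assuming $\tilde{\bm{s}}_{k+1}\neq\bm{0}$, $\bm{s}_{k+1}=\tilde{\bm{s}}_{k+1}/\|\tilde{\bm{s}}_{k+1}\|_{A\Sigma_0A^\top}$. Then for each $m$ such that $\tilde{\bm{s}}_1,\dots,\tilde{\bm{s}}_m\neq\bm{0}$, the set $\{\bm{s}_i\}_{i=1}^m$ is $A\Sigma_0A^\top$-orthonormal, and consequently $\Lambda_m=I$ (so in particular the recursion is well defined).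
   Context: $\bm{x}_k$ is the posterior mean of $\bm{x}$ under the prior $\mathcal{N}(\bm{x}_0,\Sigma_0)$ conditioned on $S_k^\top A\bm{x}=S_k^\top\bm{b}$. A set $\{\bm{s}_i\}$ is $A\Sigma_0A^\top$-orthonormal if $\langle\bm{s}_i,\bm{s}_j\rangle_{A\Sigma_0A^\top}=\delta_{ij}$. *)

theory Defs
  imports "Jordan_Normal_Form.Determinant"
begin

(* Matrix inverse (the genuine inverse whenever det M \<noteq> 0) *)
definition minv :: "real mat \<Rightarrow> real mat" where
  "minv M = (1 / det M) \<cdot>\<^sub>m adj_mat M"

definition wmat :: "real mat \<Rightarrow> real mat \<Rightarrow> real mat" where
  "wmat A Sig = A * Sig * A\<^sup>T"

definition ipW :: "real mat \<Rightarrow> real vec \<Rightarrow> real vec \<Rightarrow> real" where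
  "ipW W u v = u \<bullet> (W *\<^sub>v v)"

definition normW :: "real mat \<Rightarrow> real vec \<Rightarrow> real" where
  "normW W v = sqrt (ipW W v v)"

definition sym_pos_def :: "nat \<Rightarrow> real mat \<Rightarrow> bool" where
  "sym_pos_def d S \<longleftrightarrow> S \<in> carrier_mat d d \<and> S\<^sup>T = S \<and>
     (\<forall>v \<in> carrier_vec d. v \<noteq> 0\<^sub>v d \<longrightarrow> v \<bullet> (S *\<^sub>v v) > 0)"

definition Smat :: "nat \<Rightarrow> real vec list \<Rightarrow> real mat" where
  "Smat d ss = mat_of_cols d ss"

definition Lambda :: "nat \<Rightarrow> real mat \<Rightarrow> real mat \<Rightarrow> real vec list \<Rightarrow> real mat" where
  "Lambda d A Sig ss = (Smat d ss)\<^sup>T * wmat A Sig * Smat d ss"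

definition xk :: "nat \<Rightarrow> real mat \<Rightarrow> real mat \<Rightarrow> real vec \<Rightarrow> real vec \<Rightarrow> real vec list \<Rightarrow> real vec" where
  "xk d A Sig b x0 ss =
     x0 + (Sig * A\<^sup>T * Smat d ss * minv (Lambda d A Sig ss) * (Smat d ss)\<^sup>T) *\<^sub>v (b - A *\<^sub>v x0)"

definition next_stilde :: "nat \<Rightarrow> real mat \<Rightarrow> real mat \<Rightarrow> real vec \<Rightarrow> real vec \<Rightarrow> real vec list \<Rightarrow> real vec" where
  "next_stilde d A Sig b x0 ss =
     (let r = b - A *\<^sub>v xk d A Sig b x0 ss; s = last ss
      in r - ipW (wmat A Sig) s r \<cdot>\<^sub>v s)"

definition normalizeW :: "real mat \<Rightarrow> real vec \<Rightarrow> real vec" where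
  "normalizeW W v = (1 / normW W v) \<cdot>\<^sub>v v"

(* svecs k = [s_1, ..., s_k] *)
fun svecs :: "nat \<Rightarrow> real mat \<Rightarrow> real mat \<Rightarrow> real vec \<Rightarrow> real vec \<Rightarrow> nat \<Rightarrow> real vec list" where
  "svecs d A Sig b x0 0 = []"
| "svecs d A Sig b x0 (Suc k) =
     (if k = 0 then [normalizeW (wmat A Sig) (b - A *\<^sub>v x0)]
      else svecs d A Sig b x0 k @
           [normalizeW (wmat A Sig) (next_stilde d A Sig b x0 (svecs d A Sig b x0 k))])"

fun stilde :: "nat \<Rightarrow> real mat \<Rightarrow> real mat \<Rightarrow> real vec \<Rightarrow> real vec \<Rightarrow> nat \<Rightarrow> real vec" where
  "stilde d A Sig b x0 0 = undefined"
| "stilde d A Sig b x0 (Suc 0) = b - A *\<^sub>v x0"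
| "stilde d A Sig b x0 (Suc (Suc k)) = next_stilde d A Sig b x0 (svecs d A Sig b x0 (Suc k))"

definition svec :: "nat \<Rightarrow> real mat \<Rightarrow> real mat \<Rightarrow> real vec \<Rightarrow> real vec \<Rightarrow> nat \<Rightarrow> real vec" where
  "svec d A Sig b x0 k = last (svecs d A Sig b x0 k)"

end

theory Submission imports Defs begin

lemma minv_one: "minv (1\<^sub>m n) = (1\<^sub>m n :: real mat)"
proof -
  have e1: "adj_mat (1\<^sub>m n) * 1\<^sub>m n = det (1\<^sub>m n) \<cdot>\<^sub>m (1\<^sub>m n :: real mat)"
    using adj_mat(3)[of "1\<^sub>m n" n] by simp
  have e3: "1 \<cdot>\<^sub>m (1\<^sub>m n) = (1\<^sub>m n :: real mat)" by (intro eq_matI) auto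
  have e4: "adj_mat (1\<^sub>m n) * 1\<^sub>m n = (adj_mat (1\<^sub>m n) :: real mat)"
    using adj_mat(1)[of "1\<^sub>m n" n] by (intro right_mult_one_mat') auto
  have "adj_mat (1\<^sub>m n) = (adj_mat (1\<^sub>m n) :: real mat) * 1\<^sub>m n" using e4 by simp
  also have "\<dots> = 1\<^sub>m n" using e1 e3 by simp
  finally show ?thesis unfolding minv_def using e3 by simp
qed

lemma mcols_index:
  fixes ss :: "real vec list"
  assumes ss: "set ss \<subseteq> carrier_vec d" and r: "r \<in> carrier_vec d" and i: "i < d"
  shows "(mat_of_cols d ss *\<^sub>v ((mat_of_cols d ss)\<^sup>T *\<^sub>v r)) $ i
     = (\<Sum>l<length ss. (ss ! l) $ i * ((ss ! l) \<bullet> r))"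
proof -
  have "(mat_of_cols d ss *\<^sub>v ((mat_of_cols d ss)\<^sup>T *\<^sub>v r)) $ i
     = (\<Sum>l<length ss. mat_of_cols d ss $$ (i,l) * ((mat_of_cols d ss)\<^sup>T *\<^sub>v r) $ l)"
    using i by (simp add: scalar_prod_def row_def lessThan_atLeast0)
  also have "\<dots> = (\<Sum>l<length ss. (ss ! l) $ i * ((ss ! l) \<bullet> r))"
    using i ss r by (intro sum.cong) (auto simp: mat_of_cols_index subsetD)
  finally show ?thesis .
qed

lemma mcols_append:
  fixes ss :: "real vec list"
  assumes ss: "set ss \<subseteq> carrier_vec d" and s: "s \<in> carrier_vec d" and r: "r \<in> carrier_vec d"
  shows "mat_of_cols d (ss @ [s]) *\<^sub>v ((mat_of_cols d (ss @ [s]))\<^sup>T *\<^sub>v r)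
     = mat_of_cols d ss *\<^sub>v ((mat_of_cols d ss)\<^sup>T *\<^sub>v r) + (s \<bullet> r) \<cdot>\<^sub>v s"
proof (rule eq_vecI)
  fix i assume "i < dim_vec (mat_of_cols d ss *\<^sub>v ((mat_of_cols d ss)\<^sup>T *\<^sub>v r) + (s \<bullet> r) \<cdot>\<^sub>v s)"
  hence i: "i < d" using s by simp
  have ss2: "set (ss @ [s]) \<subseteq> carrier_vec d" using ss s by auto
  show "(mat_of_cols d (ss @ [s]) *\<^sub>v ((mat_of_cols d (ss @ [s]))\<^sup>T *\<^sub>v r)) $ i =
    (mat_of_cols d ss *\<^sub>v ((mat_of_cols d ss)\<^sup>T *\<^sub>v r) + (s \<bullet> r) \<cdot>\<^sub>v s) $ i"
  proof -
    have "(\<Sum>l<length (ss @ [s]). (ss @ [s]) ! l $ i * ((ss @ [s]) ! l \<bullet> r))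
      = (\<Sum>l<length ss. (ss @ [s]) ! l $ i * ((ss @ [s]) ! l \<bullet> r)) + s $ i * (s \<bullet> r)"
      by simp
    also have "(\<Sum>l<length ss. (ss @ [s]) ! l $ i * ((ss @ [s]) ! l \<bullet> r))
       = (\<Sum>l<length ss. ss ! l $ i * (ss ! l \<bullet> r))"
      by (intro sum.cong) (auto simp: nth_append)
    finally show ?thesis unfolding mcols_index[OF ss2 r i] using i s
      by (simp add: mcols_index[OF ss r i] mult.commute)
  qed
qed (use s in simp)

lemma self_scalar_prod_zero:
  fixes v :: "real vec"
  assumes "v \<bullet> v = 0" shows "v = 0\<^sub>v (dim_vec v)"
proof (rule eq_vecI)
  have "(\<Sum>i\<in>{0..<dim_vec v}. v $ i * v $ i) = 0" using assms by (simp add: scalar_prod_def)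
  hence "\<forall>i\<in>{0..<dim_vec v}. v $ i * v $ i = 0"
    by (subst sum_nonneg_eq_0_iff[symmetric]) auto
  thus "\<And>i. i < dim_vec (0\<^sub>v (dim_vec v)) \<Longrightarrow> v $ i = 0\<^sub>v (dim_vec v) $ i" by auto
qed simp

locale setting =
  fixes d :: nat and A Sig :: "real mat" and b x0 :: "real vec"
  assumes A: "A \<in> carrier_mat d d" and inv: "invertible_mat A"
    and b: "b \<in> carrier_vec d" and x0: "x0 \<in> carrier_vec d"
    and Sigp: "sym_pos_def d Sig"
begin

definition "W = wmat A Sig"
definition "r0 = b - A *\<^sub>v x0"
definition "st i = stilde d A Sig b x0 (Suc i)"
definition "sv i = normalizeW W (st i)"
definition "L j = map sv [0..<j]"
definition "S j = mat_of_cols d (L j)"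
definition "r j = b - A *\<^sub>v xk d A Sig b x0 (L j)"
definition "P j = S j *\<^sub>v ((S j)\<^sup>T *\<^sub>v r0)"
definition "Orth n \<longleftrightarrow> (\<forall>i<n. \<forall>l<n. sv i \<bullet> (W *\<^sub>v sv l) = (if i = l then 1 else 0))"

lemma Sig: "Sig \<in> carrier_mat d d" "Sig\<^sup>T = Sig"
  "\<And>v. v \<in> carrier_vec d \<Longrightarrow> v \<noteq> 0\<^sub>v d \<Longrightarrow> v \<bullet> (Sig *\<^sub>v v) > 0"
  using Sigp unfolding sym_pos_def_def by auto

lemma W: "W \<in> carrier_mat d d" unfolding W_def wmat_def using A Sig by auto

lemma WT: "W\<^sup>T = W"
proof -
  have "W\<^sup>T = (A\<^sup>T)\<^sup>T * (A * Sig)\<^sup>T" unfolding W_def wmat_def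
    using A Sig by (subst transpose_mult[of _ d d]) auto
  also have "\<dots> = A * (Sig\<^sup>T * A\<^sup>T)" using A Sig by (subst transpose_mult[of _ d d]) auto
  also have "\<dots> = W" unfolding W_def wmat_def using A Sig by (simp add: assoc_mult_mat[of _ d d _ d _ d])
  finally show ?thesis .
qed

lemma Wv: "v \<in> carrier_vec d \<Longrightarrow> W *\<^sub>v v = A *\<^sub>v (Sig *\<^sub>v (A\<^sup>T *\<^sub>v v))"
  unfolding W_def wmat_def using A Sig by (simp add: assoc_mult_mat_vec[of _ d d _ d])

lemma W_sym: assumes "u \<in> carrier_vec d" "v \<in> carrier_vec d"
  shows "u \<bullet> (W *\<^sub>v v) = (W *\<^sub>v u) \<bullet> v"
  using transpose_vec_mult_scalar[OF W assms(2) assms(1)] WT by simp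

lemma W_sym2: assumes "u \<in> carrier_vec d" "v \<in> carrier_vec d"
  shows "u \<bullet> (W *\<^sub>v v) = v \<bullet> (W *\<^sub>v u)"
  using W_sym[OF assms] comm_scalar_prod[of "W *\<^sub>v u" d v] assms W by simp

lemma AT_inj: assumes v: "v \<in> carrier_vec d" and z: "A\<^sup>T *\<^sub>v v = 0\<^sub>v d" shows "v = 0\<^sub>v d"
proof -
  obtain B where AB: "A * B = 1\<^sub>m d" and BA: "B * A = 1\<^sub>m (dim_row B)"
    using inv A unfolding invertible_mat_def inverts_mat_def by auto
  have Bc: "B \<in> carrier_mat d d"
  proof -
    have "dim_col B = d" using AB A by (metis index_mult_mat(3) index_one_mat(3))
    moreover have "dim_row B = d" using BA A by (metis index_mult_mat(3) index_one_mat(3) carrier_matD(2))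
    ultimately show ?thesis by auto
  qed
  have "B\<^sup>T * A\<^sup>T = 1\<^sub>m d" using AB A Bc transpose_mult[of A d d B d] by simp
  hence "v = (B\<^sup>T * A\<^sup>T) *\<^sub>v v" using v by simp
  also have "\<dots> = B\<^sup>T *\<^sub>v (A\<^sup>T *\<^sub>v v)" using A Bc v by simp
  also have "\<dots> = 0\<^sub>v d" using z Bc by (intro eq_vecI) auto
  finally show ?thesis .
qed

lemma W_pos: assumes v: "v \<in> carrier_vec d" "v \<noteq> 0\<^sub>v d" shows "v \<bullet> (W *\<^sub>v v) > 0"
proof -
  have "v \<bullet> (W *\<^sub>v v) = (A\<^sup>T *\<^sub>v v) \<bullet> (Sig *\<^sub>v (A\<^sup>T *\<^sub>v v))"
    unfolding Wv[OF v(1)] using transpose_vec_mult_scalar[OF A _ v(1), of "Sig *\<^sub>v (A\<^sup>T *\<^sub>v v)"] A Sig v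
    by simp
  also have "\<dots> > 0"
  proof -
    have "A\<^sup>T *\<^sub>v v \<noteq> 0\<^sub>v d" using AT_inj v by blast
    moreover have "A\<^sup>T *\<^sub>v v \<in> carrier_vec d" using A v by simp
    ultimately show ?thesis using Sig(3) by blast
  qed
  finally show ?thesis .
qed

lemma r0: "r0 \<in> carrier_vec d" unfolding r0_def using A b x0 by simp

lemma L_Suc: "L (Suc j) = L j @ [sv j]" unfolding L_def by simp
lemma L_len[simp]: "length (L j) = j" unfolding L_def by simp
lemma L_nth: "i < j \<Longrightarrow> L j ! i = sv i" unfolding L_def by simp

lemma T1: "svecs d A Sig b x0 (Suc 0) = [normalizeW (wmat A Sig) (b - A *\<^sub>v x0)]"
    unfolding svecs.simps(2) by simp
lemma T2: "st 0 = b - A *\<^sub>v x0" unfolding st_def by (simp only: stilde.simps)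
lemma T3: "svecs d A Sig b x0 (Suc (Suc k)) = svecs d A Sig b x0 (Suc k) @
      [normalizeW (wmat A Sig) (next_stilde d A Sig b x0 (svecs d A Sig b x0 (Suc k)))]"
    by (simp only: svecs.simps(2) nat.distinct if_False)
lemma T4: "st (Suc k) = next_stilde d A Sig b x0 (svecs d A Sig b x0 (Suc k))"
    unfolding st_def by (simp only: stilde.simps)
lemma T5: "svecs d A Sig b x0 (Suc (Suc k)) = svecs d A Sig b x0 (Suc k) @ [sv (Suc k)]"
  unfolding sv_def W_def by (simp only: T3 T4)

lemma svecs_Suc: "svecs d A Sig b x0 (Suc j) = svecs d A Sig b x0 j @ [sv j]"
proof (cases j)
  case 0 thus ?thesis unfolding sv_def W_def by (simp only: T1 T2 svecs.simps(1) append_Nil)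
next
  case (Suc k) thus ?thesis using T5 by (simp only:)
qed

lemma svecs_L: "svecs d A Sig b x0 j = L j"
proof (induction j)
  case 0
  have "L 0 = []" unfolding L_def by simp
  thus ?case by (simp only: svecs.simps(1))
next
  case (Suc j)
  show ?case by (simp only: svecs_Suc L_Suc Suc)
qed

lemma st0: "st 0 = r0" unfolding st_def r0_def by (simp only: stilde.simps)

lemma stSuc: "st (Suc k) = r (Suc k) - ipW W (sv k) (r (Suc k)) \<cdot>\<^sub>v sv k"
proof -
  have 1: "st (Suc k) = next_stilde d A Sig b x0 (L (Suc k))" unfolding st_def svecs_L[symmetric] by (simp only: stilde.simps)
  have 2: "next_stilde d A Sig b x0 (L (Suc k)) = r (Suc k) - ipW W (last (L (Suc k))) (r (Suc k)) \<cdot>\<^sub>v last (L (Suc k))"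
    unfolding next_stilde_def Let_def r_def W_def by (rule refl)
  have 3: "last (L (Suc k)) = sv k" by (simp only: L_Suc last_snoc)
  show ?thesis unfolding 1 2 3 by (rule refl)
qed

lemma Lambda_eq: "Lambda d A Sig (L j) = (S j)\<^sup>T * W * S j"
  by (simp only: Lambda_def S_def Smat_def W_def)

lemma X1: "dim_vec (st (Suc k)) = dim_vec (sv k)"
  apply (subst stSuc)
  apply (subst index_minus_vec(2))
  apply (subst index_smult_vec(2))
  by (rule refl)
lemma X2: "dim_vec (sv k) = dim_vec (st k)"
  unfolding sv_def normalizeW_def by (subst index_smult_vec(2)) (rule refl)

lemma st_carrier: "st k \<in> carrier_vec d"
proof (induction k)
  case 0 show ?case unfolding st0 by (rule r0)
next
  case (Suc k)
  have "dim_vec (st (Suc k)) = dim_vec (st k)" using X1 X2 by simp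
  thus ?case using carrier_vecD[OF Suc.IH] by (intro carrier_vecI) (simp only:)
qed

lemma sv_carrier: "sv k \<in> carrier_vec d" unfolding sv_def normalizeW_def using st_carrier by simp

lemma L_carrier: "set (L j) \<subseteq> carrier_vec d" unfolding L_def using sv_carrier by auto

lemma S_carrier: "S j \<in> carrier_mat d j" unfolding S_def using mat_of_cols_carrier(1)[of d "L j"] by simp

lemma r_carrier: "r j \<in> carrier_vec d" unfolding r_def using carrier_matD[OF A] by (intro carrier_vecI) simp

lemma P_carrier: "P j \<in> carrier_vec d" unfolding P_def using S_carrier[of j] r0 by simp

lemma dims[simp]: "dim_vec (r j) = d" "dim_vec (sv j) = d" "dim_vec (st j) = d" "dim_vec (P j) = d"
  using r_carrier sv_carrier st_carrier P_carrier by (auto simp: carrier_vecD)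

lemma col_S: "l < j \<Longrightarrow> col (S j) l = sv l" unfolding S_def using L_nth sv_carrier by simp

lemma ST_vec: "u \<in> carrier_vec d \<Longrightarrow> (S j)\<^sup>T *\<^sub>v u = vec j (\<lambda>l. sv l \<bullet> u)"
  by (rule eq_vecI) (use S_carrier[of j] col_S in auto)

lemma Lambda_entry: assumes "i < j" "l < j"
  shows "((S j)\<^sup>T * W * S j) $$ (i,l) = sv i \<bullet> (W *\<^sub>v sv l)"
proof -
  have "(S j)\<^sup>T * W * S j = (S j)\<^sup>T * (W * S j)"
    using S_carrier[of j] W by (intro assoc_mult_mat[of _ j d _ d _ j]) auto
  moreover have "((S j)\<^sup>T * (W * S j)) $$ (i,l) = row ((S j)\<^sup>T) i \<bullet> col (W * S j) l"
    using S_carrier[of j] W assms by (intro index_mult_mat(1)) auto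
  moreover have "row ((S j)\<^sup>T) i = sv i" using S_carrier[of j] assms col_S by simp
  moreover have "col (W * S j) l = W *\<^sub>v sv l"
    using col_mult2[OF W S_carrier assms(2)] col_S[OF assms(2)] by (simp only:)
  ultimately show ?thesis by (simp only:)
qed

lemma Lambda_one: assumes o: "Orth j" shows "Lambda d A Sig (L j) = 1\<^sub>m j"
  unfolding Lambda_eq
proof (rule eq_matI)
  fix i l assume "i < dim_row (1\<^sub>m j :: real mat)" "l < dim_col (1\<^sub>m j :: real mat)"
  hence il: "i < j" "l < j" by auto
  show "((S j)\<^sup>T * W * S j) $$ (i, l) = 1\<^sub>m j $$ (i, l)"
    unfolding Lambda_entry[OF il] index_one_mat(1)[OF il] using o il unfolding Orth_def by auto
qed (use S_carrier[of j] W in auto)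

lemma Orth_mono: "Orth n \<Longrightarrow> j \<le> n \<Longrightarrow> Orth j" unfolding Orth_def by auto

lemma r_formula: assumes o: "Orth j" shows "r j = r0 - W *\<^sub>v P j"
proof -
  have minv: "minv (Lambda d A Sig (L j)) = 1\<^sub>m j" using Lambda_one[OF o] minv_one by simp
  define c where "c = (S j)\<^sup>T *\<^sub>v r0"
  define z where "z = S j *\<^sub>v c"
  have Sc: "S j \<in> carrier_mat d j" by (rule S_carrier)
  have cc: "c \<in> carrier_vec j" unfolding c_def using Sc r0 by simp
  have zc: "z \<in> carrier_vec d" unfolding z_def using Sc cc by simp
  have xk: "xk d A Sig b x0 (L j) = x0 + (Sig * A\<^sup>T * S j * 1\<^sub>m j * (S j)\<^sup>T) *\<^sub>v r0"
    unfolding xk_def minv Smat_def S_def r0_def by (rule refl)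
  have M1: "Sig * A\<^sup>T \<in> carrier_mat d d" using Sig A by simp
  have M2: "Sig * A\<^sup>T * S j \<in> carrier_mat d j" using M1 Sc by simp
  have e1: "Sig * A\<^sup>T * S j * 1\<^sub>m j = Sig * A\<^sup>T * S j" using M2 by (intro right_mult_one_mat') auto
  have "(Sig * A\<^sup>T * S j * (S j)\<^sup>T) *\<^sub>v r0 = (Sig * A\<^sup>T * S j) *\<^sub>v c"
    unfolding c_def using M2 Sc r0 by (intro assoc_mult_mat_vec[of _ d j _ d]) auto
  also have "\<dots> = (Sig * A\<^sup>T) *\<^sub>v z"
    unfolding z_def using M1 Sc cc by (intro assoc_mult_mat_vec[of _ d d _ j]) auto
  also have "\<dots> = Sig *\<^sub>v (A\<^sup>T *\<^sub>v z)"
    using Sig(1) A zc by (intro assoc_mult_mat_vec[of _ d d _ d]) auto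
  finally have e2: "(Sig * A\<^sup>T * S j * 1\<^sub>m j * (S j)\<^sup>T) *\<^sub>v r0 = Sig *\<^sub>v (A\<^sup>T *\<^sub>v z)" unfolding e1 .
  have sz: "Sig *\<^sub>v (A\<^sup>T *\<^sub>v z) \<in> carrier_vec d" using Sig(1) A zc by simp
  have "A *\<^sub>v xk d A Sig b x0 (L j) = A *\<^sub>v x0 + A *\<^sub>v (Sig *\<^sub>v (A\<^sup>T *\<^sub>v z))"
    unfolding xk e2 using A x0 sz by (rule mult_add_distrib_mat_vec)
  also have "\<dots> = A *\<^sub>v x0 + W *\<^sub>v z" unfolding Wv[OF zc] by (rule refl)
  finally have Ax: "A *\<^sub>v xk d A Sig b x0 (L j) = A *\<^sub>v x0 + W *\<^sub>v z" .
  have Pz: "P j = z" unfolding P_def z_def c_def by (rule refl)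
  show ?thesis unfolding r_def Ax Pz r0_def
    by (rule eq_vecI) (use A W zc x0 b in auto)
qed

lemma P0: "P 0 = 0\<^sub>v d"
proof (rule eq_vecI)
  fix i assume "i < dim_vec (0\<^sub>v d :: real vec)"
  hence i: "i < d" by simp
  show "P 0 $ i = 0\<^sub>v d $ i" unfolding P_def S_def mcols_index[OF L_carrier r0 i] using i by simp
qed (simp add: P_def S_def)

lemma r0_eq: "r 0 = r0"
proof -
  have "Orth 0" unfolding Orth_def by simp
  hence "r 0 = r0 - W *\<^sub>v 0\<^sub>v d" using r_formula P0 by simp
  thus ?thesis by (intro eq_vecI) (use W r0 in auto)
qed

lemma sv_dot_r: assumes o: "Orth n" and jn: "j \<le> n" and i: "i < n"
  shows "sv i \<bullet> r j = (if i < j then 0 else sv i \<bullet> r0)"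
proof -
  have oj: "Orth j" using Orth_mono o jn by blast
  have Wsv: "W *\<^sub>v sv i \<in> carrier_vec d" using W sv_carrier by simp
  have Sc: "S j \<in> carrier_mat d j" by (rule S_carrier)
  have c: "(S j)\<^sup>T *\<^sub>v r0 \<in> carrier_vec j" using Sc r0 by simp
  have "sv i \<bullet> r j = sv i \<bullet> r0 - sv i \<bullet> (W *\<^sub>v P j)" unfolding r_formula[OF oj]
    using sv_carrier r0 W P_carrier by (intro scalar_prod_minus_distrib[of _ d]) auto
  moreover have "sv i \<bullet> (W *\<^sub>v P j) = (W *\<^sub>v sv i) \<bullet> P j"
    using sv_carrier P_carrier by (rule W_sym)
  moreover have "(W *\<^sub>v sv i) \<bullet> P j = ((S j)\<^sup>T *\<^sub>v (W *\<^sub>v sv i)) \<bullet> ((S j)\<^sup>T *\<^sub>v r0)"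
    unfolding P_def using transpose_vec_mult_scalar[OF Sc c Wsv] by simp
  moreover have "(S j)\<^sup>T *\<^sub>v (W *\<^sub>v sv i) = vec j (\<lambda>l. if l = i then 1 else 0)"
  proof -
    have "\<And>l. l < j \<Longrightarrow> sv l \<bullet> (W *\<^sub>v sv i) = (if l = i then 1 else 0)"
      using o jn i unfolding Orth_def by auto
    thus ?thesis unfolding ST_vec[OF Wsv] by auto
  qed
  moreover have "(S j)\<^sup>T *\<^sub>v r0 = vec j (\<lambda>l. sv l \<bullet> r0)" by (rule ST_vec[OF r0])
  moreover have "vec j (\<lambda>l. if l = i then 1 else 0) \<bullet> vec j (\<lambda>l. sv l \<bullet> r0)
      = (if i < j then sv i \<bullet> r0 else 0)"
  proof -
    have "vec j (\<lambda>l. if l = i then 1 else 0) \<bullet> vec j (\<lambda>l. sv l \<bullet> r0)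
       = (\<Sum>l\<in>{0..<j}. if l = i then sv i \<bullet> r0 else 0)"
      unfolding scalar_prod_def by (intro sum.cong) auto
    also have "\<dots> = (if i < j then sv i \<bullet> r0 else 0)" by (simp add: sum.delta')
    finally show ?thesis .
  qed
  ultimately show ?thesis by simp
qed

lemma r_diff: assumes o: "Orth (Suc j)"
  shows "r j - r (Suc j) = (sv j \<bullet> r0) \<cdot>\<^sub>v (W *\<^sub>v sv j)"
proof -
  have oj: "Orth j" using Orth_mono o by auto
  have PS: "P (Suc j) = P j + (sv j \<bullet> r0) \<cdot>\<^sub>v sv j"
    unfolding P_def S_def L_Suc by (rule mcols_append[OF L_carrier sv_carrier r0])
  have "W *\<^sub>v P (Suc j) = W *\<^sub>v P j + W *\<^sub>v ((sv j \<bullet> r0) \<cdot>\<^sub>v sv j)"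
    unfolding PS using W P_carrier sv_carrier by (intro mult_add_distrib_mat_vec[of _ d d]) auto
  also have "W *\<^sub>v ((sv j \<bullet> r0) \<cdot>\<^sub>v sv j) = (sv j \<bullet> r0) \<cdot>\<^sub>v (W *\<^sub>v sv j)"
    using W sv_carrier by (intro mult_mat_vec[of _ d d]) auto
  finally have WP: "W *\<^sub>v P (Suc j) = W *\<^sub>v P j + (sv j \<bullet> r0) \<cdot>\<^sub>v (W *\<^sub>v sv j)" .
  show ?thesis unfolding r_formula[OF oj] r_formula[OF o] WP
    by (rule eq_vecI) (use W r0 P_carrier sv_carrier in auto)
qed

definition "q i = st i \<bullet> (W *\<^sub>v st i)"

lemma q_pos: "st i \<noteq> 0\<^sub>v d \<Longrightarrow> q i > 0" unfolding q_def using W_pos st_carrier by blast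

lemma sv_eq: "sv i = (1 / sqrt (q i)) \<cdot>\<^sub>v st i"
  unfolding sv_def normalizeW_def normW_def ipW_def q_def by (rule refl)

lemma st_eq: assumes "st i \<noteq> 0\<^sub>v d" shows "st i = sqrt (q i) \<cdot>\<^sub>v sv i"
proof -
  have "sqrt (q i) \<noteq> 0" using q_pos[OF assms] by simp
  thus ?thesis unfolding sv_eq by (intro eq_vecI) auto
qed

lemma sv_norm: assumes "st i \<noteq> 0\<^sub>v d" shows "sv i \<bullet> (W *\<^sub>v sv i) = 1"
proof -
  have qp: "q i > 0" by (rule q_pos[OF assms])
  let ?a = "1 / sqrt (q i)"
  have "sv i \<bullet> (W *\<^sub>v sv i) = ?a * ?a * q i"
    unfolding sv_eq q_def using W st_carrier
    by (simp add: mult_mat_vec[of _ d d])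
  also have "\<dots> = 1" using qp by (simp add: field_simps)
  finally show ?thesis .
qed

lemma r_Suc_eq: "r (Suc k) = st (Suc k) + ipW W (sv k) (r (Suc k)) \<cdot>\<^sub>v sv k"
  unfolding stSuc by (rule eq_vecI) (use r_carrier sv_carrier in auto)

lemma perp: assumes o: "Orth n" and j: "j < n" and nz: "\<forall>i<n. st i \<noteq> 0\<^sub>v d"
  shows "r j \<bullet> r n = 0"
proof (cases j)
  case 0
  have "r j = sqrt (q 0) \<cdot>\<^sub>v sv 0" unfolding 0 r0_eq st0[symmetric] using nz j 0 by (intro st_eq) auto
  hence "r j \<bullet> r n = sqrt (q 0) * (sv 0 \<bullet> r n)" using sv_carrier r_carrier by simp
  also have "sv 0 \<bullet> r n = 0" using sv_dot_r[OF o order.refl, of 0] j 0 by simp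
  finally show ?thesis by simp
next
  case (Suc k)
  define g where "g = ipW W (sv k) (r j)"
  have "r j = sqrt (q j) \<cdot>\<^sub>v sv j + g \<cdot>\<^sub>v sv k"
    unfolding g_def Suc using r_Suc_eq[of k] st_eq[of "Suc k"] nz j Suc by simp
  hence "r j \<bullet> r n = sqrt (q j) * (sv j \<bullet> r n) + g * (sv k \<bullet> r n)"
    using sv_carrier r_carrier by (simp add: add_scalar_prod_distrib[of _ d])
  also have "sv j \<bullet> r n = 0" using sv_dot_r[OF o order.refl, of j] j by simp
  also have "sv k \<bullet> r n = 0" using sv_dot_r[OF o order.refl, of k] j Suc by simp
  finally show ?thesis by simp
qed

lemma rho_nz: assumes o: "Orth n" and i: "i < n" and nz: "\<forall>i<n. st i \<noteq> 0\<^sub>v d"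
  shows "sv i \<bullet> r0 \<noteq> 0"
proof
  assume rho: "sv i \<bullet> r0 = 0"
  have sti: "st i \<noteq> 0\<^sub>v d" using nz i by auto
  have e1: "sv i \<bullet> r i = sv i \<bullet> r0" using sv_dot_r[OF o _ i, of i] i by simp
  have e2: "sv i \<bullet> r i = (1 / sqrt (q i)) * (st i \<bullet> r i)"
    unfolding sv_eq using st_carrier r_carrier by simp
  have e3: "st i \<bullet> r i = r i \<bullet> r i"
  proof (cases i)
    case 0 thus ?thesis using st0 r0_eq by simp
  next
    case (Suc k)
    have "st i \<bullet> r i = r i \<bullet> r i - ipW W (sv k) (r i) * (sv k \<bullet> r i)"
      unfolding Suc stSuc using r_carrier sv_carrier
      by (simp add: minus_scalar_prod_distrib[of _ d])
    also have "sv k \<bullet> r i = 0" using sv_dot_r[OF o _, of i k] i Suc by simp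
    finally show ?thesis by simp
  qed
  have qp: "sqrt (q i) > 0" using q_pos[OF sti] by simp
  have "r i \<bullet> r i = 0" using e1 e2 e3 rho qp by simp
  hence r0v: "r i = 0\<^sub>v d" using self_scalar_prod_zero[of "r i"] r_carrier[of i] by simp
  have "st i = 0\<^sub>v d"
  proof (cases i)
    case 0 thus ?thesis using st0 r0_eq r0v by simp
  next
    case (Suc k)
    have "W *\<^sub>v 0\<^sub>v d = (0\<^sub>v d :: real vec)" by (intro eq_vecI) (use W in auto)
    hence "ipW W (sv k) (r i) = 0" unfolding ipW_def r0v using sv_carrier by simp
    thus ?thesis unfolding Suc stSuc using r0v Suc
      by (intro eq_vecI) (use sv_carrier in auto)
  qed
  thus False using sti by simp
qed

lemma H: assumes o: "Orth n" and i: "Suc i < n" and nz: "\<forall>i<n. st i \<noteq> 0\<^sub>v d"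
  shows "sv i \<bullet> (W *\<^sub>v r n) = 0"
proof -
  have rho: "sv i \<bullet> r0 \<noteq> 0" using rho_nz[OF o _ nz] i by simp
  have oi: "Orth (Suc i)" using Orth_mono[OF o] i by simp
  have Wsv: "W *\<^sub>v sv i \<in> carrier_vec d" using W sv_carrier by simp
  have "(sv i \<bullet> r0) * ((W *\<^sub>v sv i) \<bullet> r n) = ((sv i \<bullet> r0) \<cdot>\<^sub>v (W *\<^sub>v sv i)) \<bullet> r n"
    using Wsv r_carrier by simp
  also have "\<dots> = (r i - r (Suc i)) \<bullet> r n" unfolding r_diff[OF oi] by (rule refl)
  also have "\<dots> = r i \<bullet> r n - r (Suc i) \<bullet> r n"
    using r_carrier by (intro minus_scalar_prod_distrib)
  also have "\<dots> = 0" using perp[OF o _ nz, of i] perp[OF o _ nz, of "Suc i"] i by simp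
  finally have "(W *\<^sub>v sv i) \<bullet> r n = 0" using rho by simp
  thus ?thesis using W_sym[OF sv_carrier r_carrier] by simp
qed

lemma step: assumes o: "Orth n" and nz: "\<forall>i<Suc n. st i \<noteq> 0\<^sub>v d"
  shows "Orth (Suc n)"
proof -
  have nzn: "\<forall>i<n. st i \<noteq> 0\<^sub>v d" using nz by auto
  have stn: "st n \<noteq> 0\<^sub>v d" using nz by auto
  have K: "sv i \<bullet> (W *\<^sub>v sv n) = 0" if i: "i < n" for i
  proof -
    obtain k where n: "n = Suc k" using i by (cases n) auto
    let ?a = "1 / sqrt (q n)"
    let ?g = "ipW W (sv k) (r n)"
    have "sv i \<bullet> (W *\<^sub>v sv n) = ?a * (sv i \<bullet> (W *\<^sub>v st n))"
      unfolding sv_eq[of n] using W st_carrier sv_carrier by (simp add: mult_mat_vec[of _ d d])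
    also have "W *\<^sub>v st n = W *\<^sub>v r n - ?g \<cdot>\<^sub>v (W *\<^sub>v sv k)"
      unfolding n stSuc using W r_carrier sv_carrier
      by (simp add: mult_minus_distrib_mat_vec[of _ d d] mult_mat_vec[of _ d d])
    also have "sv i \<bullet> (W *\<^sub>v r n - ?g \<cdot>\<^sub>v (W *\<^sub>v sv k)) = sv i \<bullet> (W *\<^sub>v r n) - ?g * (sv i \<bullet> (W *\<^sub>v sv k))"
      using W r_carrier sv_carrier by (simp add: scalar_prod_minus_distrib[of _ d])
    also have "\<dots> = 0"
    proof (cases "i = k")
      case True
      have "sv k \<bullet> (W *\<^sub>v sv k) = 1" using o n unfolding Orth_def by auto
      thus ?thesis using True unfolding ipW_def n by simp
    next
      case False
      hence ik: "Suc i < n" using i n by simp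
      have "sv i \<bullet> (W *\<^sub>v sv k) = 0" using o n i False unfolding Orth_def by auto
      thus ?thesis using H[OF o ik nzn] by simp
    qed
    finally show ?thesis by simp
  qed
  show ?thesis unfolding Orth_def
  proof (intro allI impI)
    fix i l assume i: "i < Suc n" and l: "l < Suc n"
    show "sv i \<bullet> (W *\<^sub>v sv l) = (if i = l then 1 else 0)"
    proof (cases "i < n \<and> l < n")
      case True thus ?thesis using o unfolding Orth_def by auto
    next
      case False
      hence "i = n \<or> l = n" using i l by auto
      thus ?thesis
      proof
        assume "i = n"
        thus ?thesis
        proof (cases "l = n")
          case True thus ?thesis using \<open>i = n\<close> sv_norm[OF stn] by simp
        next
          case False
          hence "l < n" using l by simp
          thus ?thesis using K[of l] W_sym2[OF sv_carrier sv_carrier, of n l] \<open>i = n\<close> False by simp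
        qed
      next
        assume "l = n"
        thus ?thesis
        proof (cases "i = n")
          case True thus ?thesis using \<open>l = n\<close> sv_norm[OF stn] by simp
        next
          case False
          hence "i < n" using i by simp
          thus ?thesis using K[of i] \<open>l = n\<close> False by simp
        qed
      qed
    qed
  qed
qed

lemma Orth_all: assumes nz: "\<forall>i<m. st i \<noteq> 0\<^sub>v d" shows "n \<le> m \<Longrightarrow> Orth n"
proof (induction n)
  case 0 thus ?case unfolding Orth_def by simp
next
  case (Suc n)
  thus ?case using step[of n] nz by simp
qed

end

theorem proposition7:
  fixes d m :: nat and A Sig :: "real mat" and b x0 :: "real vec"
  assumes "A \<in> carrier_mat d d" and "invertible_mat A"
    and "b \<in> carrier_vec d" and "x0 \<in> carrier_vec d"
    and "sym_pos_def d Sig"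
    and "\<forall>i \<in> {1..m}. stilde d A Sig b x0 i \<noteq> 0\<^sub>v d"
  shows "(\<forall>i \<in> {1..m}. \<forall>j \<in> {1..m}.
            ipW (wmat A Sig) (svec d A Sig b x0 i) (svec d A Sig b x0 j) = (if i = j then 1 else 0))
         \<and> Lambda d A Sig (svecs d A Sig b x0 m) = 1\<^sub>m m"
proof -
  interpret setting d A Sig b x0 by (unfold_locales) (use assms in auto)
  have nz: "\<forall>i<m. st i \<noteq> 0\<^sub>v d"
  proof (intro allI impI)
    fix i assume "i < m"
    hence "Suc i \<in> {1..m}" by simp
    thus "st i \<noteq> 0\<^sub>v d" unfolding st_def using assms(6) by blast
  qed
  have om: "Orth m" using Orth_all[OF nz] by simp
  have sv_eq': "svec d A Sig b x0 (Suc k) = sv k" for k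
    unfolding svec_def svecs_L L_Suc by simp
  have P1: "ipW (wmat A Sig) (svec d A Sig b x0 i) (svec d A Sig b x0 j) = (if i = j then 1 else 0)"
    if i: "i \<in> {1..m}" and j: "j \<in> {1..m}" for i j
  proof -
    obtain i' where i': "i = Suc i'" using i by (cases i) auto
    obtain j' where j': "j = Suc j'" using j by (cases j) auto
    have "i' < m" "j' < m" using i j i' j' by auto
    thus ?thesis using om unfolding Orth_def i' j' sv_eq' ipW_def W_def[symmetric] by auto
  qed
  show ?thesis using P1 Lambda_one[OF om] svecs_L by auto
qed

end
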